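(* Let $\theta,\lambda$ be cardinals with $\lambda\ge2^\theta$ and let $\varphi\in L^{1,c}_{\lambda^+,\le\theta}$. Then there is a fragment $\mathcal{T}$ of $L^{1,c}_{\lambda^+,\le\theta}$ with $\varphi\in\mathcal{T}$ and $|\mathcal{T}|\le\lambda$.
   Context: $L^{1,c}_{\lambda^+,\le\theta}$ is the smallest class of formulas containing $L_{\theta^+\omega}$ and closed under: (a) $\bigwedge\Phi,\bigvee\Phi$ for sets $\Phi$ of its formulas with $|\Phi|\le\lambda$ and at most $\theta$ free variables altogether; (b) $\forall x$, $\exists x$, $\neg$; (c) (basic splits) if $\overline{x},\overline{y}$ are tuples of variables of length $\le\theta$ and for every $A\subseteq\overline{x}$, $\varphi_A(\overline{x},\overline{y})$ is a formula with free variables in $A\cup\overline{y}$, then $\forall\overline{x}\bigvee_f\bigwedge_n\varphi_{f^{-1}(n)}(\overline{x},\overline{y})$ and $\exists\overline{x}\bigwedge_f\bigvee_n\varphi_{f^{-1}(n)}(\overline{x},\overline{y})$ are formulas ($f$ ranging over functions $\overline{x}\to\omega$); the immediate subformulas of such a basic split are the $\varphi_A$, $A\subseteq\overline{x}$. A fragment is a set of formulas closed under subformulas. *)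

theory Defs
  imports Main
begin

text \<open>Conjunctions/disjunctions are indexed: Conj K F denotes the conjunction
of the set F ` K. SplitAll X Y P is the basic split
forall X. OR_f AND_n P (f^-1 n), and SplitEx X Y P the dual, where P A is the formula
phi_A for A a subset of X (tuples of variables represented by sets of variables).\<close>

datatype ('a, 'v, 'k) form =
    Atom 'a "'v list"
  | Neg "('a, 'v, 'k) form"
  | Conj "'k set" "'k \<Rightarrow> ('a, 'v, 'k) form"
  | Disj "'k set" "'k \<Rightarrow> ('a, 'v, 'k) form"
  | All 'v "('a, 'v, 'k) form"
  | Ex 'v "('a, 'v, 'k) form"
  | SplitAll "'v set" "'v set" "'v set \<Rightarrow> ('a, 'v, 'k) form"
  | SplitEx "'v set" "'v set" "'v set \<Rightarrow> ('a, 'v, 'k) form"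

primrec fv :: "('a, 'v, 'k) form \<Rightarrow> 'v set" where
  "fv (Atom a vs) = set vs"
| "fv (Neg p) = fv p"
| "fv (Conj K F) = (\<Union>k\<in>K. fv (F k))"
| "fv (Disj K F) = (\<Union>k\<in>K. fv (F k))"
| "fv (All x p) = fv p - {x}"
| "fv (Ex x p) = fv p - {x}"
| "fv (SplitAll X Y P) = (\<Union>A\<in>Pow X. fv (P A)) - X"
| "fv (SplitEx X Y P) = (\<Union>A\<in>Pow X. fv (P A)) - X"

primrec isub :: "('a, 'v, 'k) form \<Rightarrow> ('a, 'v, 'k) form set" where
  "isub (Atom a vs) = {}"
| "isub (Neg p) = {p}"
| "isub (Conj K F) = F ` K"
| "isub (Disj K F) = F ` K"
| "isub (All x p) = {p}"
| "isub (Ex x p) = {p}"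
| "isub (SplitAll X Y P) = P ` Pow X"
| "isub (SplitEx X Y P) = P ` Pow X"

text \<open>L_{theta^+ omega}, theta = |T|: conjunctions/disjunctions of at most theta formulas.\<close>
inductive_set Lthetaomega :: "'t set \<Rightarrow> ('a, 'v, 'k) form set" for T :: "'t set" where
  atom: "Atom a vs \<in> Lthetaomega T"
| neg: "p \<in> Lthetaomega T \<Longrightarrow> Neg p \<in> Lthetaomega T"
| all: "p \<in> Lthetaomega T \<Longrightarrow> All x p \<in> Lthetaomega T"
| ex: "p \<in> Lthetaomega T \<Longrightarrow> Ex x p \<in> Lthetaomega T"
| conj: "(\<And>k. k \<in> K \<Longrightarrow> F k \<in> Lthetaomega T) \<Longrightarrow> (card_of (F ` K), card_of T) \<in> ordLeq
         \<Longrightarrow> Conj K F \<in> Lthetaomega T"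
| disj: "(\<And>k. k \<in> K \<Longrightarrow> F k \<in> Lthetaomega T) \<Longrightarrow> (card_of (F ` K), card_of T) \<in> ordLeq
         \<Longrightarrow> Disj K F \<in> Lthetaomega T"

text \<open>L^{1,c}_{lambda^+, <= theta}, theta = |T|, lambda = |L|.\<close>
inductive_set L1c :: "'t set \<Rightarrow> 'l set \<Rightarrow> ('a, 'v, 'k) form set"
  for T :: "'t set" and L :: "'l set" where
  base: "p \<in> Lthetaomega T \<Longrightarrow> p \<in> L1c T L"
| conj: "(\<And>k. k \<in> K \<Longrightarrow> F k \<in> L1c T L) \<Longrightarrow> (card_of (F ` K), card_of L) \<in> ordLeq
         \<Longrightarrow> (card_of (\<Union>k\<in>K. fv (F k)), card_of T) \<in> ordLeq
         \<Longrightarrow> Conj K F \<in> L1c T L"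
| disj: "(\<And>k. k \<in> K \<Longrightarrow> F k \<in> L1c T L) \<Longrightarrow> (card_of (F ` K), card_of L) \<in> ordLeq
         \<Longrightarrow> (card_of (\<Union>k\<in>K. fv (F k)), card_of T) \<in> ordLeq
         \<Longrightarrow> Disj K F \<in> L1c T L"
| neg: "p \<in> L1c T L \<Longrightarrow> Neg p \<in> L1c T L"
| all: "p \<in> L1c T L \<Longrightarrow> All x p \<in> L1c T L"
| ex: "p \<in> L1c T L \<Longrightarrow> Ex x p \<in> L1c T L"
| splitall: "(card_of X, card_of T) \<in> ordLeq \<Longrightarrow> (card_of Y, card_of T) \<in> ordLeq
         \<Longrightarrow> (\<And>A. A \<subseteq> X \<Longrightarrow> P A \<in> L1c T L \<and> fv (P A) \<subseteq> A \<union> Y)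
         \<Longrightarrow> SplitAll X Y P \<in> L1c T L"
| splitex: "(card_of X, card_of T) \<in> ordLeq \<Longrightarrow> (card_of Y, card_of T) \<in> ordLeq
         \<Longrightarrow> (\<And>A. A \<subseteq> X \<Longrightarrow> P A \<in> L1c T L \<and> fv (P A) \<subseteq> A \<union> Y)
         \<Longrightarrow> SplitEx X Y P \<in> L1c T L"

text \<open>A fragment: a set of formulas closed under (immediate, hence all) subformulas.\<close>
definition fragment :: "('a, 'v, 'k) form set \<Rightarrow> bool" where
  "fragment S \<longleftrightarrow> (\<forall>p\<in>S. isub p \<subseteq> S)"

end

theory Submission
  imports Defs
begin

lemma fin_le_inf:
  assumes "finite A" "infinite B"
  shows "(card_of A, card_of B) \<in> ordLeq"
  apply (rule ordLess_imp_ordLeq)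
  apply (rule finite_ordLess_infinite)
  using assms by (auto simp: Field_card_of card_of_well_order_on)

lemma form_isub_induct:
  assumes "\<And>p. (\<And>q. q \<in> isub p \<Longrightarrow> P q) \<Longrightarrow> P p"
  shows "P p"
  by (induct p; rule assms; auto)

inductive_set subs :: "('a, 'v, 'k) form \<Rightarrow> ('a, 'v, 'k) form set" for p where
  self: "p \<in> subs p"
| step: "q \<in> subs p \<Longrightarrow> r \<in> isub q \<Longrightarrow> r \<in> subs p"

lemma subs_trans: "r \<in> subs q \<Longrightarrow> q \<in> subs p \<Longrightarrow> r \<in> subs p"
  by (induct rule: subs.induct) (auto intro: subs.step)

lemma subs_unfold: "subs p = insert p (\<Union>q\<in>isub p. subs q)"
proof
  show "subs p \<subseteq> insert p (\<Union>q\<in>isub p. subs q)"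
  proof
    fix r assume "r \<in> subs p"
    then show "r \<in> insert p (\<Union>q\<in>isub p. subs q)"
      by (induct rule: subs.induct) (auto intro: subs.intros)
  qed
next
  show "insert p (\<Union>q\<in>isub p. subs q) \<subseteq> subs p"
    using subs_trans subs.intros by blast
qed

lemma Ltheta_isub: "p \<in> Lthetaomega T \<Longrightarrow> q \<in> isub p \<Longrightarrow> q \<in> Lthetaomega T"
  by (induct rule: Lthetaomega.induct) auto

lemma L1c_isub: "p \<in> L1c T L \<Longrightarrow> q \<in> isub p \<Longrightarrow> q \<in> L1c T L"
proof (induct rule: L1c.induct)
  case (base p)
  then show ?case using Ltheta_isub L1c.base by metis
qed auto

lemma pow_mono_card:
  assumes "(card_of X, card_of T) \<in> ordLeq"
  shows "(card_of (Pow X), card_of (Pow T)) \<in> ordLeq"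
proof -
  obtain f where f: "inj_on f X" "f ` X \<subseteq> T"
    using assms card_of_ordLeq[of X T] by auto
  have "inj_on (image f) (Pow X)"
    using f(1) by (auto simp: inj_on_def inj_on_image_eq_iff)
  moreover have "image f ` Pow X \<subseteq> Pow T" using f(2) by auto
  ultimately show ?thesis using card_of_ordLeq[of "Pow X" "Pow T"] by auto
qed

lemma PowT_le:
  assumes "(card_of (Pow T), card_of L) \<in> ordLeq"
  shows "(card_of T, card_of L) \<in> ordLeq"
  by (rule ordLeq_transitive[OF ordLess_imp_ordLeq[OF card_of_Pow] assms])

lemma Ltheta_isub_card:
  assumes "p \<in> Lthetaomega T" "infinite L"
    and "(card_of (Pow T), card_of L) \<in> ordLeq"
  shows "(card_of (isub p), card_of L) \<in> ordLeq"
  using assms(1)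
proof (cases rule: Lthetaomega.cases)
  case (conj K F)
  then show ?thesis using PowT_le[OF assms(3)] ordLeq_transitive by auto
next
  case (disj K F)
  then show ?thesis using PowT_le[OF assms(3)] ordLeq_transitive by auto
qed (use assms(2) in \<open>auto intro: fin_le_inf\<close>)

lemma L1c_isub_card:
  assumes "p \<in> L1c T L" "infinite L"
    and "(card_of (Pow T), card_of L) \<in> ordLeq"
  shows "(card_of (isub p), card_of L) \<in> ordLeq"
  using assms(1)
proof (cases rule: L1c.cases)
  case (base)
  then show ?thesis using Ltheta_isub_card assms by blast
next
  case (splitall X Y P)
  have a: "(card_of (P ` Pow X), card_of (Pow X)) \<in> ordLeq" by (rule card_of_image)
  have b: "(card_of (Pow X), card_of (Pow T)) \<in> ordLeq" using splitall(2) by (rule pow_mono_card)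
  show ?thesis using splitall(1) ordLeq_transitive[OF ordLeq_transitive[OF a b] assms(3)] by simp
next
  case (splitex X Y P)
  have a: "(card_of (P ` Pow X), card_of (Pow X)) \<in> ordLeq" by (rule card_of_image)
  have b: "(card_of (Pow X), card_of (Pow T)) \<in> ordLeq" using splitex(2) by (rule pow_mono_card)
  show ?thesis using splitex(1) ordLeq_transitive[OF ordLeq_transitive[OF a b] assms(3)] by simp
qed (use assms(2) in \<open>auto intro: fin_le_inf\<close>)

lemma subs_card:
  assumes "infinite L" and "(card_of (Pow T), card_of L) \<in> ordLeq"
  shows "p \<in> L1c T L \<longrightarrow> (card_of (subs p), card_of L) \<in> ordLeq"
proof (induct p rule: form_isub_induct)
  case (1 p)
  show ?case
  proof
    assume p: "p \<in> L1c T L"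
    let ?U = "\<Union>q\<in>isub p. subs q"
    have U: "(card_of ?U, card_of L) \<in> ordLeq"
      apply (rule card_of_UNION_ordLeq_infinite)
      using assms L1c_isub_card[OF p assms] 1 L1c_isub[OF p] by auto
    have e: "subs p = (\<Union>i\<in>{True, False}. if i then {p} else ?U)"
      using subs_unfold[of p] by auto
    show "(card_of (subs p), card_of L) \<in> ordLeq"
      unfolding e
      apply (rule card_of_UNION_ordLeq_infinite)
      using assms U by (auto intro: fin_le_inf)
  qed
qed

lemma subs_L1c: "q \<in> subs p \<Longrightarrow> p \<in> L1c T L \<Longrightarrow> q \<in> L1c T L"
  by (induct rule: subs.induct) (auto intro: L1c_isub)

theorem mainTheorem7:
  fixes T :: "'t set" and L :: "'l set" and \<phi> :: "('a, 'v, 'k) form"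
  assumes "infinite L"
    and "(card_of (Pow T), card_of L) \<in> ordLeq"
    and "\<phi> \<in> L1c T L"
  shows "\<exists>S. S \<subseteq> L1c T L \<and> fragment S \<and> \<phi> \<in> S \<and> (card_of S, card_of L) \<in> ordLeq"
proof (intro exI conjI)
  show "subs \<phi> \<subseteq> L1c T L" using subs_L1c assms(3) by blast
  show "fragment (subs \<phi>)" unfolding fragment_def using subs.step by blast
  show "\<phi> \<in> subs \<phi>" by (rule subs.self)
  show "(card_of (subs \<phi>), card_of L) \<in> ordLeq" using subs_card[OF assms(1,2)] assms(3) by blast
qed

end
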